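(* For every $n\ge 1$, every integer $k\ge1$ and every symmetric $0/1$ matrix $a=(a_{ij})_{1\le i,j\le n}$ with zero diagonal, \[ \max_{\mathbf e_n\in[k]^n}\bigl|\,Q_{\mathrm{ICL}}(\mathbf e_n)-Q_{\mathrm{ML}}(\mathbf e_n)\,\bigr|\;\le\;\frac{k^2(\log n+2)}{n^2}. \]
   Context: For $\mathbf e_n=(e_1,\dots,e_n)\in[k]^n$, $[k]=\{1,\dots,k\}$, define the counters $n_a(\mathbf e_n)=\#\{i: e_i=a\}$; $n_{ab}(\mathbf e_n)=n_a(\mathbf e_n)n_b(\mathbf e_n)$ if $a\ne b$ and $n_{aa}(\mathbf e_n)=n_a(\mathbf e_n)(n_a(\mathbf e_n)-1)$; $o_{ab}(\mathbf e_n)=\sum_{1\le i,j\le n}\mathbf 1\{e_i=a,e_j=b\}a_{ij}$. Let $\tau(x)=x\log x+(1-x)\log(1-x)$ (with $0\log 0=0$). The likelihood modularity is $Q_{\mathrm{ML}}(\mathbf e_n)=\frac{1}{2n^2}\sum_{1\le a,b\le k}n_{ab}(\mathbf e_n)\,\tau\bigl(o_{ab}(\mathbf e_n)/n_{ab}(\mathbf e_n)\bigr)$ (terms with $n_{ab}(\mathbf e_n)=0$ are taken as $0$). Let $\tilde o_{aa}=o_{aa}/2$, $\tilde n_{aa}=n_{aa}/2$ and $\tilde o_{ab}=o_{ab}$, $\tilde n_{ab}=n_{ab}$ for $a\neq b$. The integrated conditional likelihood modularity is $Q_{\mathrm{ICL}}(\mathbf e_n)=\frac1{n^2}\sum_{1\le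 a\le b\le k}\log\frac{B(\tilde o_{ab}(\mathbf e_n)+1/2,\ \tilde n_{ab}(\mathbf e_n)-\tilde o_{ab}(\mathbf e_n)+1/2)}{B(1/2,1/2)}$, where $B$ is the beta function (it is the normalized log of the integral of the Bernoulli likelihood against independent $\mathrm{Beta}(1/2,1/2)$ priors on the connection probabilities). *)

theory Defs
  imports "HOL-Analysis.Analysis"
begin

text \<open>Nodes are 1..n, labels are 1..k; e :: nat => nat is a label assignment,
  A :: nat => nat => real the adjacency matrix.\<close>

definition cnt :: "nat \<Rightarrow> (nat \<Rightarrow> nat) \<Rightarrow> nat \<Rightarrow> nat" where
  "cnt n e a = card {i \<in> {1..n}. e i = a}"

definition npair :: "nat \<Rightarrow> (nat \<Rightarrow> nat) \<Rightarrow> nat \<Rightarrow> nat \<Rightarrow> real" where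
  "npair n e a b = (if a \<noteq> b then real (cnt n e a) * real (cnt n e b)
                    else real (cnt n e a) * (real (cnt n e a) - 1))"

definition opair :: "nat \<Rightarrow> (nat \<Rightarrow> nat \<Rightarrow> real) \<Rightarrow> (nat \<Rightarrow> nat) \<Rightarrow> nat \<Rightarrow> nat \<Rightarrow> real" where
  "opair n A e a b = (\<Sum>i\<in>{1..n}. \<Sum>j\<in>{1..n}. if e i = a \<and> e j = b then A i j else 0)"

text \<open>tau with the convention 0 log 0 = 0.\<close>
definition tau :: "real \<Rightarrow> real" where
  "tau x = (if x = 0 then 0 else x * ln x) + (if x = 1 then 0 else (1 - x) * ln (1 - x))"

definition Q_ML :: "nat \<Rightarrow> nat \<Rightarrow> (nat \<Rightarrow> nat \<Rightarrow> real) \<Rightarrow> (nat \<Rightarrow> nat) \<Rightarrow> real" where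
  "Q_ML n k A e = 1 / (2 * real n ^ 2) *
     (\<Sum>a\<in>{1..k}. \<Sum>b\<in>{1..k}.
        if npair n e a b = 0 then 0
        else npair n e a b * tau (opair n A e a b / npair n e a b))"

definition otil :: "nat \<Rightarrow> (nat \<Rightarrow> nat \<Rightarrow> real) \<Rightarrow> (nat \<Rightarrow> nat) \<Rightarrow> nat \<Rightarrow> nat \<Rightarrow> real" where
  "otil n A e a b = (if a = b then opair n A e a b / 2 else opair n A e a b)"

definition ntil :: "nat \<Rightarrow> (nat \<Rightarrow> nat) \<Rightarrow> nat \<Rightarrow> nat \<Rightarrow> real" where
  "ntil n e a b = (if a = b then npair n e a b / 2 else npair n e a b)"

definition Q_ICL :: "nat \<Rightarrow> nat \<Rightarrow> (nat \<Rightarrow> nat \<Rightarrow> real) \<Rightarrow> (nat \<Rightarrow> nat) \<Rightarrow> real" where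
  "Q_ICL n k A e = 1 / real n ^ 2 *
     (\<Sum>a\<in>{1..k}. \<Sum>b\<in>{a..k}.
        ln (Beta (otil n A e a b + 1/2) (ntil n e a b - otil n A e a b + 1/2)
            / Beta (1/2 :: real) (1/2)))"

end

theory Submission
  imports Defs
begin


lemma ln_upper3:
  fixes t :: real assumes "t \<ge> 0"
  shows "ln (1 + t) \<le> t - t^2/2 + t^3/3"
proof -
  let ?f = "\<lambda>s::real. s - s^2/2 + s^3/3 - ln (1 + s)"
  have "?f 0 \<le> ?f t"
  proof (rule DERIV_nonneg_imp_nondecreasing[OF assms])
    fix x :: real assume x: "0 \<le> x" "x \<le> t"
    have "DERIV ?f x :> (1 - x + x^2 - 1/(1+x))"
      using x by (auto intro!: derivative_eq_intros simp: power2_eq_square)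
    moreover have "1 - x + x^2 - 1/(1+x) \<ge> 0"
    proof -
      have "1 - x + x^2 - 1/(1+x) = x^3/(1+x)" using x by (simp add: field_simps power2_eq_square power3_eq_cube)
      thus ?thesis using x by simp
    qed
    ultimately show "\<exists>y. DERIV ?f x :> y \<and> y \<ge> 0" by blast
  qed
  thus ?thesis by simp
qed

lemma ln_lower2:
  fixes t :: real assumes "t \<ge> 0"
  shows "2*t/(2+t) \<le> ln (1 + t)"
proof -
  let ?f = "\<lambda>s. (2 + s) * ln (1 + s) - 2 * s :: real"
  have "?f 0 \<le> ?f t"
  proof (rule DERIV_nonneg_imp_nondecreasing[OF assms])
    fix x :: real assume x: "0 \<le> x" "x \<le> t"
    have "DERIV ?f x :> (ln (1 + x) + (2 + x) / (1 + x) - 2)"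
      using x by (auto intro!: derivative_eq_intros)
    moreover have "ln (1 + x) + (2 + x) / (1 + x) - 2 \<ge> 0"
    proof -
      have "ln (1/(1+x)) \<le> 1/(1+x) - 1" using x by (intro ln_le_minus_one) auto
      moreover have "ln (1/(1+x)) = - ln (1+x)" using x by (subst ln_div) auto
      moreover have "(2 + x) / (1 + x) - 2 = (1/(1+x) - 1)" using x by (simp add: field_simps)
      ultimately show ?thesis by linarith
    qed
    ultimately show "\<exists>y. DERIV ?f x :> y \<and> y \<ge> 0" by blast
  qed
  hence "2 * t \<le> (2 + t) * ln (1 + t)" by simp
  thus ?thesis using assms by (simp add: divide_simps mult.commute)
qed

definition Lst :: "nat \<Rightarrow> real" where
  "Lst m = ln (fact m) + m - m * ln m - ln m / 2"

lemma Lst_step: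
  assumes "m \<ge> 1"
  shows "Lst (Suc m) = Lst m + 1 - (m + 1/2) * ln (1 + 1/m)"
proof -
  have "ln (1 + 1/real m) = ln ((m+1) / m)" using assms by (simp add: field_simps)
  also have "\<dots> = ln (m+1) - ln m" using assms by (subst ln_div) auto
  finally have h: "ln (1 + real m) = ln (1 + 1/real m) + ln m" by simp
  have f: "ln (fact (Suc m) :: real) = ln (1 + real m) + ln (fact m)"
    by (simp add: ln_mult add.commute)
  have "Lst (Suc m) = ln (fact (Suc m)) + (1 + real m) - (1 + real m) * ln (1 + real m) - ln (1 + real m) / 2"
    unfolding Lst_def by simp
  also have "\<dots> = Lst m + 1 - (m + 1/2) * ln (1 + 1/m)"
    unfolding f h Lst_def by (simp add: algebra_simps)
  finally show ?thesis .
qed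

lemma Lst_bounds:
  assumes "m \<ge> 1"
  shows "Lst m \<le> 1 \<and> 1/2 + 1/(2*m) \<le> Lst m"
  using assms
proof (induction m rule: dec_induct)
  case base
  then show ?case by (simp add: Lst_def)
next
  case (step m)
  define t where "t = 1 / real m"
  have t: "t > 0" "t \<le> 1" using step(1) by (auto simp: t_def)
  have mt: "real m = 1/t" using t by (simp add: t_def)
  have lo: "(m + 1/2) * ln (1 + t) \<ge> 1"
  proof -
    have mt1: "real m * t = 1" using step(1) by (simp add: t_def)
    have A: "(m+1/2) * (2*t/(2+t)) = 1" using t mt1 by (simp add: field_simps)
    have B: "(m+1/2) * (2*t/(2+t)) \<le> (m + 1/2) * ln (1+t)"
      using ln_lower2[of t] t by (intro mult_left_mono) auto
    show ?thesis using A B by linarith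
  qed
  have hi: "(m + 1/2) * ln (1 + t) - 1 \<le> 1/(2*m) - 1/(2*(m+1))"
  proof -
    have "(m + 1/2) * ln (1 + t) \<le> (m+1/2) * (t - t^2/2 + t^3/3)"
      using ln_upper3[of t] t by (intro mult_left_mono) auto
    also have "\<dots> = 1 + t^2/12 + t^3/6" using t by (simp add: mt field_simps power2_eq_square power3_eq_cube)
    also have "\<dots> \<le> 1 + t^2/4"
    proof -
      have "t^3 \<le> t^2" using t by (simp add: power3_eq_cube power2_eq_square mult_left_le)
      thus ?thesis by simp
    qed
    also have "t^2/4 \<le> 1/(2*m) - 1/(2*(m+1))"
    proof -
      have "1/(2*real m) - 1/(2*(m+1)) = 1/(2*m*(m+1))" using step(1) by (simp add: field_simps)
      moreover have "t^2/4 = 1/(4*m*m)" by (simp add: t_def power2_eq_square)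
      moreover have "2*real m*(m+1) \<le> 4*m*m" using step(1) by (simp add: algebra_simps)
      moreover have "1/(4*real m*m) \<le> 1/(2*m*(m+1))"
        using step(1) by (intro divide_left_mono) (auto simp: algebra_simps intro!: add_pos_pos)
      ultimately show ?thesis by simp
    qed
    ultimately show ?thesis by linarith
  qed
  have e: "Lst (Suc m) = Lst m + 1 - (m + 1/2) * ln (1 + t)"
    using Lst_step[OF step(1)] by (simp add: t_def)
  show ?case using step(3) lo hi e by (simp add: algebra_simps)
qed


lemma Gamma_half_nat:
  "Gamma (real m + 1/2) = sqrt pi * fact (2*m) / (4^m * fact m)"
proof (induction m)
  case 0
  then show ?case by (simp add: Gamma_one_half_real)
next
  case (Suc m)
  have nz: "real m + 1/2 \<notin> \<int>\<^sub>\<le>\<^sub>0"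
  proof
    assume "real m + 1/2 \<in> \<int>\<^sub>\<le>\<^sub>0"
    hence "real m + 1/2 \<le> 0" by (rule nonpos_Ints_nonpos)
    thus False by simp
  qed
  have "Gamma (real (Suc m) + 1/2) = Gamma ((real m + 1/2) + 1)" by (simp add: algebra_simps)
  also have "\<dots> = (real m + 1/2) * Gamma (real m + 1/2)" using nz by (rule Gamma_plus1)
  also have "\<dots> = (real m + 1/2) * (sqrt pi * fact (2*m) / (4^m * fact m))" using Suc by simp
  also have "\<dots> = sqrt pi * fact (2*Suc m) / (4^Suc m * fact (Suc m))"
  proof -
    have "fact (2 * Suc m) = (2*real m + 2) * (2*real m + 1) * (fact (2*m) :: real)"
      by (simp add: algebra_simps)
    moreover have "fact (Suc m) = (real m + 1) * (fact m :: real)" by simp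
    ultimately have "sqrt pi * fact (2*Suc m) / (4^Suc m * fact (Suc m))
      = sqrt pi * ((2*real m + 2) * (2*real m + 1) * fact (2*m)) / (4 * 4^m * ((real m + 1) * fact m))"
      by (simp only: power_Suc)
    also have "\<dots> = (real m + 1/2) * (sqrt pi * fact (2*m) / (4^m * fact m))"
    proof -
      have p: "(fact m::real) \<noteq> 0" "(4::real)^m \<noteq> 0" "real m + 1 \<noteq> 0" by auto
      have q: "(2*real m + 2) * (2*real m + 1) = 4 * (real m + 1) * (real m + 1/2)" by (simp add: algebra_simps)
      show ?thesis unfolding q using p by (simp add: divide_simps mult_ac)
    qed
    finally show ?thesis by simp
  qed
  finally show ?case .
qed

lemma Beta_ratio:
  "Beta (real x + 1/2) (real y + 1/2) / Beta (1/2) (1/2)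
     = fact (2*x) * fact (2*y) / (4^(x+y) * fact x * fact y * fact (x+y))"
proof -
  have B0: "Beta (1/2) (1/2 :: real) = pi"
    unfolding Beta_def by (simp add: Gamma_one_half_real)
  have "Gamma (real x + 1/2 + (real y + 1/2)) = Gamma (1 + real (x+y))" by (simp add: algebra_simps)
  also have "\<dots> = fact (x+y)" by (rule Gamma_fact)
  finally have G: "Gamma (real x + 1/2 + (real y + 1/2)) = fact (x+y)" .
  show ?thesis unfolding B0 unfolding Beta_def G Gamma_half_nat
    by (simp add: field_simps power_add)
qed

definition phi :: "nat \<Rightarrow> real" where
  "phi m = ln (fact (2*m)) - ln (fact m) - m * ln 4 - (m * ln m - m)"

lemma ln2_bounds: "0 \<le> ln (2::real)" "ln (2::real) \<le> 1"
  using ln_le_minus_one[of "2::real"] by auto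

lemma phi_bounds: "-1/2 \<le> phi m \<and> phi m \<le> 1"
proof (cases "m = 0")
  case True
  then show ?thesis by (simp add: phi_def)
next
  case False
  hence m: "m \<ge> 1" by simp
  have l4: "ln (4::real) = 2 * ln 2"
    using ln_mult[of "2::real" 2] by simp
  have l2m: "ln (real (2*m)) = ln 2 + ln m" using m by (simp add: ln_mult)
  have "phi m = Lst (2*m) - Lst m + ln 2 / 2"
    unfolding phi_def Lst_def l4 l2m by (simp add: algebra_simps)
  moreover have "Lst (2*m) \<le> 1 \<and> 1/2 + 1/(2*real (2*m)) \<le> Lst (2*m)" using m by (intro Lst_bounds) simp
  moreover have "Lst m \<le> 1 \<and> 1/2 + 1/(2*real m) \<le> Lst m" using m by (intro Lst_bounds) simp
  moreover have "0 \<le> 1/(2*real (2*m))" by simp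
  moreover have "0 \<le> 1/(2*real m)" by simp
  ultimately show ?thesis using ln2_bounds by linarith
qed

lemma N_tau:
  fixes x y :: nat assumes "x + y \<ge> 1"
  shows "real (x+y) * tau (real x / real (x+y)) = x * ln x + y * ln y - (x+y) * ln (x+y)"
proof -
  define N where "N = real (x+y)"
  have N: "N > 0" using assms by (simp add: N_def)
  have one: "1 - real x / N = real y / N" using N by (simp add: N_def field_simps)
  have t1: "N * (if real x / N = 0 then 0 else real x / N * ln (real x / N)) = x * ln x - x * ln N"
  proof (cases "x = 0")
    case True then show ?thesis by simp
  next
    case False
    then show ?thesis using N by (simp add: ln_div field_simps)
  qed
  have t2: "N * (if real x / N = 1 then 0 else (1 - real x / N) * ln (1 - real x / N)) = y * ln y - y * ln N"
  proof (cases "y = 0")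
    case True then show ?thesis using N by (simp add: N_def)
  next
    case False
    hence "real x / N \<noteq> 1" using N by (simp add: N_def field_simps)
    then show ?thesis using N False unfolding one by (simp add: ln_div field_simps)
  qed
  show ?thesis unfolding tau_def distrib_left t1[unfolded N_def] t2[unfolded N_def] N_def[symmetric]
    using t1 t2 unfolding N_def by (simp add: algebra_simps)
qed

lemma KT_bound:
  fixes x y :: nat assumes "x + y \<ge> 1"
  shows "\<bar>ln (Beta (real x + 1/2) (real y + 1/2) / Beta (1/2) (1/2))
          - real (x+y) * tau (real x / real (x+y))\<bar> \<le> 2 + ln (real (x+y)) / 2"
proof -
  define N where "N = x + y"
  have pos: "fact (2*x) * fact (2*y) / (4^(x+y) * fact x * fact y * fact (x+y)) > (0::real)"
    by (intro divide_pos_pos mult_pos_pos) auto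
  have "ln (Beta (real x + 1/2) (real y + 1/2) / Beta (1/2) (1/2))
     = ln (fact (2*x)) + ln (fact (2*y)) - (x+y) * ln 4 - ln (fact x) - ln (fact y) - ln (fact (x+y))"
    unfolding Beta_ratio by (simp add: ln_div ln_mult ln_realpow)
  also have "\<dots> = phi x + phi y + (x * ln x + y * ln y - N * ln N) - (Lst N + ln N / 2)"
    unfolding phi_def Lst_def N_def by (simp add: algebra_simps)
  finally have e: "ln (Beta (real x + 1/2) (real y + 1/2) / Beta (1/2) (1/2))
     = phi x + phi y + (x * ln x + y * ln y - N * ln N) - (Lst N + ln N / 2)" .
  have L: "Lst N \<le> 1 \<and> 1/2 + 1/(2*real N) \<le> Lst N" using assms by (intro Lst_bounds) (simp add: N_def)
  have "0 \<le> 1/(2*real N)" by simp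
  moreover have "0 \<le> ln (real N)" using assms by (simp add: N_def)
  moreover note e N_tau[OF assms, folded N_def] phi_bounds[of x] phi_bounds[of y] L
  ultimately have "\<bar>ln (Beta (real x + 1/2) (real y + 1/2) / Beta (1/2) (1/2))
          - real N * tau (real x / real N)\<bar> \<le> 2 + ln (real N) / 2"
    by (simp only: abs_le_iff) linarith
  thus ?thesis unfolding N_def .
qed

lemma opair_alt:
  "opair n A e a b = (\<Sum>i\<in>{i\<in>{1..n}. e i = a}. \<Sum>j\<in>{j\<in>{1..n}. e j = b}. A i j)"
proof -
  have "opair n A e a b = (\<Sum>i\<in>{1..n}. if e i = a then (\<Sum>j\<in>{1..n}. if e j = b then A i j else 0) else 0)"
    unfolding opair_def by (intro sum.cong refl) (auto intro: sum.neutral)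
  also have "\<dots> = (\<Sum>i\<in>{i\<in>{1..n}. e i = a}. \<Sum>j\<in>{1..n}. if e j = b then A i j else 0)"
    by (simp only: sum.inter_filter[OF finite_atLeastAtMost])
  also have "\<dots> = (\<Sum>i\<in>{i\<in>{1..n}. e i = a}. \<Sum>j\<in>{j\<in>{1..n}. e j = b}. A i j)"
    by (rule sum.cong[OF refl]) (rule sum.inter_filter[OF finite_atLeastAtMost, symmetric])
  finally show ?thesis .
qed

lemma row_sum_nat:
  assumes "finite D" "\<forall>j\<in>D. A i j = 0 \<or> A i j = 1"
  shows "(\<Sum>j\<in>D. A i j) = real (card {j\<in>D. A i j = 1})"
proof -
  have "(\<Sum>j\<in>D. A i j) = (\<Sum>j\<in>D. if A i j = 1 then 1 else 0)"
    using assms(2) by (intro sum.cong refl) auto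
  also have "\<dots> = (\<Sum>j\<in>{j\<in>D. A i j = 1}. 1)" by (rule sum.inter_filter[OF assms(1), symmetric])
  finally show ?thesis by simp
qed

lemma off_count:
  assumes "finite C" "finite D" "\<forall>i\<in>C. \<forall>j\<in>D. A i j = 0 \<or> A i j = 1"
  shows "\<exists>m::nat. (\<Sum>i\<in>C. \<Sum>j\<in>D. A i j) = real m \<and> m \<le> card C * card D"
proof -
  have "(\<Sum>i\<in>C. \<Sum>j\<in>D. A i j) = (\<Sum>i\<in>C. real (card {j\<in>D. A i j = 1}))"
    using assms by (intro sum.cong refl row_sum_nat) auto
  also have "\<dots> = real (\<Sum>i\<in>C. card {j\<in>D. A i j = 1})" by simp
  finally have 1: "(\<Sum>i\<in>C. \<Sum>j\<in>D. A i j) = real (\<Sum>i\<in>C. card {j\<in>D. A i j = 1})" .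
  have "(\<Sum>i\<in>C. card {j\<in>D. A i j = 1}) \<le> (\<Sum>i\<in>C. card D)"
    using assms by (intro sum_mono card_mono) auto
  also have "\<dots> = card C * card D" by simp
  finally show ?thesis using 1 by blast
qed

lemma diag_count:
  assumes "finite C" "\<forall>i\<in>C. \<forall>j\<in>C. A i j = 0 \<or> A i j = 1"
    "\<forall>i\<in>C. \<forall>j\<in>C. A i j = A j i" "\<forall>i\<in>C. A i i = 0"
  shows "\<exists>m::nat. (\<Sum>i\<in>C. \<Sum>j\<in>C. A i j) = 2 * real m \<and> 2 * m + card C \<le> card C * card C"
  using assms
proof (induction C rule: finite_induct)
  case empty
  then show ?case by simp
next
  case (insert c C)
  have p1: "\<forall>i\<in>C. \<forall>j\<in>C. A i j = 0 \<or> A i j = 1" using insert.prems(1) by blast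
  have p2: "\<forall>i\<in>C. \<forall>j\<in>C. A i j = A j i" using insert.prems(2) by blast
  have p3: "\<forall>i\<in>C. A i i = 0" using insert.prems(3) by blast
  obtain m where m: "(\<Sum>i\<in>C. \<Sum>j\<in>C. A i j) = 2 * real m" "2 * m + card C \<le> card C * card C"
    using insert.IH[OF p1 p2 p3] by blast
  have Acc: "A c c = 0" using insert.prems(3) by blast
  define r where "r = card {j\<in>C. A c j = 1}"
  have r: "(\<Sum>j\<in>C. A c j) = real r" unfolding r_def
    using insert.hyps insert.prems(1) by (intro row_sum_nat) auto
  have rC: "r \<le> card C" unfolding r_def using insert.hyps by (intro card_mono) auto
  have sym: "(\<Sum>i\<in>C. A i c) = (\<Sum>j\<in>C. A c j)"
  proof (rule sum.cong[OF refl])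
    fix i assume "i \<in> C" thus "A i c = A c i" using insert.prems(2) by blast
  qed
  have "(\<Sum>i\<in>insert c C. \<Sum>j\<in>insert c C. A i j)
      = (A c c + (\<Sum>j\<in>C. A c j)) + (\<Sum>i\<in>C. A i c + (\<Sum>j\<in>C. A i j))"
    using insert.hyps by (simp add: sum.insert sum.distrib)
  also have "\<dots> = 2 * real (m + r)"
    using m r sym Acc by (simp add: sum.distrib algebra_simps)
  finally have 1: "(\<Sum>i\<in>insert c C. \<Sum>j\<in>insert c C. A i j) = 2 * real (m + r)" .
  have "2 * (m + r) + card (insert c C) \<le> card (insert c C) * card (insert c C)"
    using insert.hyps m rC by (simp add: algebra_simps)
  with 1 show ?case by blast
qed

lemma double_sum_sym:
  fixes F :: "nat \<Rightarrow> nat \<Rightarrow> real"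
  assumes "\<And>a b. F a b = F b a"
  shows "(\<Sum>a\<in>{1..k}. \<Sum>b\<in>{1..k}. F a b) = (\<Sum>a\<in>{1..k}. \<Sum>b\<in>{a..k}. if a = b then F a b else 2 * F a b)"
proof (induction k)
  case 0
  then show ?case by simp
next
  case (Suc k)
  have L: "(\<Sum>a\<in>{1..Suc k}. \<Sum>b\<in>{1..Suc k}. F a b)
     = (\<Sum>a\<in>{1..k}. \<Sum>b\<in>{1..k}. F a b) + 2 * (\<Sum>a\<in>{1..k}. F a (Suc k)) + F (Suc k) (Suc k)"
  proof -
    have "(\<Sum>a\<in>{1..Suc k}. \<Sum>b\<in>{1..Suc k}. F a b)
       = (\<Sum>a\<in>{1..k}. (\<Sum>b\<in>{1..k}. F a b) + F a (Suc k)) + ((\<Sum>b\<in>{1..k}. F (Suc k) b) + F (Suc k) (Suc k))"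
      by (simp add: add.commute)
    also have "(\<Sum>b\<in>{1..k}. F (Suc k) b) = (\<Sum>a\<in>{1..k}. F a (Suc k))" using assms by simp
    finally show ?thesis by (simp add: sum.distrib)
  qed
  have R: "(\<Sum>a\<in>{1..Suc k}. \<Sum>b\<in>{a..Suc k}. if a = b then F a b else 2 * F a b)
     = (\<Sum>a\<in>{1..k}. \<Sum>b\<in>{a..k}. if a = b then F a b else 2 * F a b) + 2 * (\<Sum>a\<in>{1..k}. F a (Suc k)) + F (Suc k) (Suc k)"
  proof -
    have "(\<Sum>a\<in>{1..Suc k}. \<Sum>b\<in>{a..Suc k}. if a = b then F a b else 2 * F a b)
       = (\<Sum>a\<in>{1..k}. \<Sum>b\<in>{a..Suc k}. if a = b then F a b else 2 * F a b) + F (Suc k) (Suc k)"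
      by simp
    also have "(\<Sum>a\<in>{1..k}. \<Sum>b\<in>{a..Suc k}. if a = b then F a b else 2 * F a b)
       = (\<Sum>a\<in>{1..k}. (\<Sum>b\<in>{a..k}. if a = b then F a b else 2 * F a b) + 2 * F a (Suc k))"
      by (intro sum.cong refl) auto
    finally show ?thesis by (simp add: sum.distrib sum_distrib_left)
  qed
  show ?case using L R Suc by simp
qed



lemma Beta_half_half: "Beta (1/2) (1/2 :: real) = pi"
  unfolding Beta_def by (simp add: Gamma_one_half_real)

lemma pair_bound:
  fixes x h n :: nat
  assumes "x \<le> h" "h \<le> n^2" "n \<ge> 1"
  shows "\<bar>ln (Beta (real x + 1/2) (real h - real x + 1/2) / Beta (1/2) (1/2))
          - (if h = 0 then 0 else real h * tau (real x / real h))\<bar> \<le> ln (real n) + 2"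
proof (cases "h = 0")
  case True
  then have "x = 0" using assms by simp
  then show ?thesis using True assms by (simp add: Beta_half_half)
next
  case False
  define y where "y = h - x"
  have hy: "h = x + y" "real h - real x = real y" using assms by (auto simp: y_def)
  have "x + y \<ge> 1" using False hy(1) by linarith
  note kt = KT_bound[OF this]
  have rh: "real h = real x + real y" using hy(1) by simp
  have b: "\<bar>ln (Beta (real x + 1/2) (real y + 1/2) / Beta (1/2) (1/2))
          - real h * tau (real x / real h)\<bar> \<le> 2 + ln (real h) / 2" unfolding rh using kt by simp
  have "ln (real h) \<le> ln (real n ^ 2)"
    using False assms by (intro ln_mono) (auto simp flip: of_nat_power)
  also have "\<dots> = 2 * ln (real n)" by (simp add: ln_realpow)
  finally have lh: "ln (real h) \<le> 2 * ln (real n)" .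
  show ?thesis unfolding if_not_P[OF False] hy(2) using b lh by linarith
qed

lemma opair_sym:
  assumes "\<forall>i\<in>{1..n}. \<forall>j\<in>{1..n}. A i j = A j i"
  shows "opair n A e a b = opair n A e b a"
proof -
  have "opair n A e a b = (\<Sum>i\<in>{i\<in>{1..n}. e i = a}. \<Sum>j\<in>{j\<in>{1..n}. e j = b}. A j i)"
    unfolding opair_alt using assms by (intro sum.cong refl) auto
  also have "\<dots> = opair n A e b a" unfolding opair_alt by (rule sum.swap)
  finally show ?thesis .
qed

lemma cnt_le: "cnt n e a \<le> n"
proof -
  have "cnt n e a \<le> card {1..n}" unfolding cnt_def by (intro card_mono) auto
  thus ?thesis by simp
qed

lemma pair_term:
  fixes n k :: nat and A :: "nat \<Rightarrow> nat \<Rightarrow> real"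
  assumes "n \<ge> 1"
    and A01: "\<forall>i\<in>{1..n}. \<forall>j\<in>{1..n}. A i j = 0 \<or> A i j = 1"
    and Asym: "\<forall>i\<in>{1..n}. \<forall>j\<in>{1..n}. A i j = A j i"
    and Adiag: "\<forall>i\<in>{1..n}. A i i = 0"
    and ab: "a \<le> b"
  shows "\<bar>ln (Beta (otil n A e a b + 1/2) (ntil n e a b - otil n A e a b + 1/2) / Beta (1/2 :: real) (1/2))
      - (if a = b then (if npair n e a b = 0 then 0 else npair n e a b * tau (opair n A e a b / npair n e a b)) / 2
         else (if npair n e a b = 0 then 0 else npair n e a b * tau (opair n A e a b / npair n e a b)))\<bar>
      \<le> ln (real n) + 2"
proof -
  define C where "C = (\<lambda>a. {i\<in>{1..n}. e i = a})"
  have Csub: "C a \<subseteq> {1..n}" for a unfolding C_def by auto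
  have fin: "finite (C a)" for a using Csub by (rule finite_subset) simp
  have cnt: "cnt n e a = card (C a)" for a unfolding cnt_def C_def ..
  have op: "opair n A e a b = (\<Sum>i\<in>C a. \<Sum>j\<in>C b. A i j)" for a b unfolding opair_alt C_def ..
  show ?thesis
  proof (cases "a = b")
    case True
    define c where "c = card (C a)"
    have cn: "c \<le> n" using cnt_le[of n e a] cnt by (simp add: c_def)
    obtain m where m: "opair n A e a a = 2 * real m" "2 * m + c \<le> c * c"
      using diag_count[of "C a" A] fin Csub A01 Asym Adiag unfolding op c_def by blast
    have ev: "even (c * c - c)"
    proof -
      have "c * c - c = c * (c - 1)" by (simp add: algebra_simps)
      moreover have "even (c * (c - 1))" by (cases "even c") auto
      ultimately show ?thesis by simp
    qed
    then obtain h where h: "c * c - c = 2 * h" by blast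
    have np: "npair n e a a = 2 * real h"
    proof -
      have "npair n e a a = real c * (real c - 1)" unfolding npair_def cnt c_def by simp
      also have "\<dots> = real (c * c - c)" by (cases c) (auto simp: algebra_simps)
      finally show ?thesis using h by simp
    qed
    have mh: "m \<le> h" using m(2) h by linarith
    have hn: "h \<le> n^2"
    proof -
      have "c * c \<le> n * n" using cn by (intro mult_mono) auto
      thus ?thesis using h by (simp add: power2_eq_square)
    qed
    have ot: "otil n A e a a = real m" unfolding otil_def using m by simp
    have nt: "ntil n e a a = real h" unfolding ntil_def using np by simp
    have F: "(if npair n e a a = 0 then 0 else npair n e a a * tau (opair n A e a a / npair n e a a)) / 2
        = (if h = 0 then 0 else real h * tau (real m / real h))"
      unfolding np m(1) by simp
    have b: "b = a" using True by simp
    have "if a = a then P else Q" if "P" for P Q using that by simp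
    show ?thesis unfolding b ot nt if_P[OF refl] F using pair_bound[OF mh hn \<open>n \<ge> 1\<close>] .
  next
    case False
    obtain m where m: "opair n A e a b = real m" "m \<le> card (C a) * card (C b)"
      using off_count[of "C a" "C b" A] fin Csub A01 unfolding op by blast
    define h where "h = card (C a) * card (C b)"
    have np: "npair n e a b = real h" unfolding npair_def h_def cnt using False by simp
    have hn: "h \<le> n^2"
    proof -
      have "card (C a) * card (C b) \<le> n * n" using cnt_le[of n e] cnt by (intro mult_mono) auto
      thus ?thesis by (simp add: h_def power2_eq_square)
    qed
    have mh: "m \<le> h" using m h_def by simp
    have ot: "otil n A e a b = real m" unfolding otil_def using m False by simp
    have nt: "ntil n e a b = real h" unfolding ntil_def using np False by simp
    show ?thesis unfolding ot nt if_not_P[OF False] np m(1) of_nat_eq_0_iff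
      using pair_bound[OF mh hn \<open>n \<ge> 1\<close>] .
  qed
qed


lemma diff_bound:
  fixes n k :: nat and A :: "nat \<Rightarrow> nat \<Rightarrow> real"
  assumes n1: "n \<ge> 1"
    and A01: "\<forall>i\<in>{1..n}. \<forall>j\<in>{1..n}. A i j = 0 \<or> A i j = 1"
    and Asym: "\<forall>i\<in>{1..n}. \<forall>j\<in>{1..n}. A i j = A j i"
    and Adiag: "\<forall>i\<in>{1..n}. A i i = 0"
  shows "\<bar>Q_ICL n k A e - Q_ML n k A e\<bar> \<le> real k ^ 2 * (ln (real n) + 2) / real n ^ 2"
proof -
  define F where "F = (\<lambda>a b. if npair n e a b = 0 then 0 else npair n e a b * tau (opair n A e a b / npair n e a b))"
  define H where "H = (\<lambda>a b. if a = b then F a b / 2 else F a b)"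
  define G where "G = (\<lambda>a b. ln (Beta (otil n A e a b + 1/2) (ntil n e a b - otil n A e a b + 1/2) / Beta (1/2 :: real) (1/2)))"
  have npsym: "npair n e a b = npair n e b a" for a b unfolding npair_def by auto
  have Fsym: "F a b = F b a" for a b unfolding F_def npsym[of a b] opair_sym[OF Asym, of e a b] ..
  have "Q_ML n k A e = 1 / (2 * real n ^ 2) * (\<Sum>a\<in>{1..k}. \<Sum>b\<in>{1..k}. F a b)"
    unfolding Q_ML_def F_def ..
  also have "\<dots> = 1 / (2 * real n ^ 2) * (\<Sum>a\<in>{1..k}. \<Sum>b\<in>{a..k}. if a = b then F a b else 2 * F a b)"
    using double_sum_sym[of F k] Fsym by simp
  also have "\<dots> = 1 / real n ^ 2 * ((\<Sum>a\<in>{1..k}. \<Sum>b\<in>{a..k}. if a = b then F a b else 2 * F a b) / 2)"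
    by simp
  also have "(\<Sum>a\<in>{1..k}. \<Sum>b\<in>{a..k}. if a = b then F a b else 2 * F a b) / 2 = (\<Sum>a\<in>{1..k}. \<Sum>b\<in>{a..k}. H a b)"
    unfolding sum_divide_distrib H_def by (intro sum.cong refl) auto
  finally have hML: "Q_ML n k A e = 1 / real n ^ 2 * (\<Sum>a\<in>{1..k}. \<Sum>b\<in>{a..k}. H a b)" .
  have hICL: "Q_ICL n k A e = 1 / real n ^ 2 * (\<Sum>a\<in>{1..k}. \<Sum>b\<in>{a..k}. G a b)"
    unfolding Q_ICL_def G_def ..
  have "Q_ICL n k A e - Q_ML n k A e = 1 / real n ^ 2 * (\<Sum>a\<in>{1..k}. \<Sum>b\<in>{a..k}. G a b - H a b)"
    unfolding hML hICL by (simp add: sum_subtractf right_diff_distrib)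
  hence "\<bar>Q_ICL n k A e - Q_ML n k A e\<bar> = \<bar>\<Sum>a\<in>{1..k}. \<Sum>b\<in>{a..k}. G a b - H a b\<bar> / real n ^ 2"
    by simp
  also have "\<dots> \<le> (\<Sum>a\<in>{1..k}. \<Sum>b\<in>{a..k}. \<bar>G a b - H a b\<bar>) / real n ^ 2"
  proof (intro divide_right_mono)
    show "\<bar>\<Sum>a\<in>{1..k}. \<Sum>b\<in>{a..k}. G a b - H a b\<bar> \<le> (\<Sum>a\<in>{1..k}. \<Sum>b\<in>{a..k}. \<bar>G a b - H a b\<bar>)"
      by (rule order_trans[OF sum_abs]) (intro sum_mono sum_abs)
  qed simp
  also have "\<dots> \<le> (\<Sum>a\<in>{1..k}. \<Sum>b\<in>{a..k}. ln (real n) + 2) / real n ^ 2"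
  proof (intro divide_right_mono sum_mono)
    fix a b assume "a \<in> {1..k}" "b \<in> {a..k}"
    hence "a \<le> b" by simp
    from pair_term[OF n1 A01 Asym Adiag this, of e]
    show "\<bar>G a b - H a b\<bar> \<le> ln (real n) + 2" unfolding G_def H_def F_def by simp
  qed simp
  also have "\<dots> \<le> (\<Sum>a\<in>{1..k}. \<Sum>b\<in>{1..k}. ln (real n) + 2) / real n ^ 2"
  proof (intro divide_right_mono sum_mono sum_mono2)
    have "0 \<le> ln (real n)" using n1 by simp
    thus "\<And>b. b \<in> {1..k} - {a..k} \<Longrightarrow> 0 \<le> ln (real n) + 2" for a by simp
  qed auto
  also have "\<dots> = real k ^ 2 * (ln (real n) + 2) / real n ^ 2"
    by (simp add: power2_eq_square)
  finally show ?thesis .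
qed

theorem lemma1:
  fixes n k :: nat and A :: "nat \<Rightarrow> nat \<Rightarrow> real"
  assumes "n \<ge> 1" and "k \<ge> 1"
    and "\<forall>i\<in>{1..n}. \<forall>j\<in>{1..n}. A i j = 0 \<or> A i j = 1"
    and "\<forall>i\<in>{1..n}. \<forall>j\<in>{1..n}. A i j = A j i"
    and "\<forall>i\<in>{1..n}. A i i = 0"
  shows "(MAX e\<in>{e. (\<forall>i\<in>{1..n}. e i \<in> {1..k}) \<and> (\<forall>i. i \<notin> {1..n} \<longrightarrow> e i = 0)}.
            \<bar>Q_ICL n k A e - Q_ML n k A e\<bar>)
         \<le> real k ^ 2 * (ln (real n) + 2) / real n ^ 2"
proof -
  define S where "S = {e. (\<forall>i\<in>{1..n}. e i \<in> {1..k}) \<and> (\<forall>i. i \<notin> {1..n} \<longrightarrow> e i = (0::nat))}"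
  have S_eq: "S = {f. \<forall>x. (x \<in> {1..n} \<longrightarrow> f x \<in> {1..k}) \<and> (x \<notin> {1..n} \<longrightarrow> f x = 0)}"
    unfolding S_def by auto
  have fin: "finite S" unfolding S_eq by (intro finite_set_of_finite_funs) auto
  have "(\<lambda>i. if i \<in> {1..n} then 1 else 0) \<in> S" unfolding S_def using assms(2) by auto
  hence ne: "S \<noteq> {}" by blast
  have "(MAX e\<in>S. \<bar>Q_ICL n k A e - Q_ML n k A e\<bar>) \<le> real k ^ 2 * (ln (real n) + 2) / real n ^ 2"
    using fin ne diff_bound[OF assms(1) assms(3-5)] by (intro Max.boundedI) auto
  thus ?thesis unfolding S_def .
qed

end
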